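(* Let $(\Omega,\mathcal{A},\mathbb{P})$ be a probability space and $k\colon\Omega\times\mathbb{R}\times\mathbb{R}\to\mathbb{R}$ jointly measurable with $|k(\omega,s,t)|\le1$ almost surely, and define $K(s,t)=\mathbb{E}_\omega[k(\omega,s,t)]$, assumed continuous and positive definite. Let $\rho$ be a Borel probability measure on $Z=\mathbb{R}^d\times\mathbb{R}\times\mathbb{R}$ with compact support $S$. For $c\in L^2(\rho)$ set $$f_c(x)=\int_S c(a,b,t)K(\langle a,x\rangle+b,t)\,d\rho(a,b,t),\qquad x\in\mathbb{R}^d.$$ Then the subclass $H^{\mathrm{cont}}_\rho=\{f_c:c\in C(S)\}$ is dense in $H_\rho=\{f_c:c\in L^2(\rho)\}$ with respect to the uniform norm on any compact set $X\subset\mathbb{R}^d$. *)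

theory Defs
  imports "HOL-Probability.Probability"
begin

definition pos_def_kernel :: "(real \<Rightarrow> real \<Rightarrow> real) \<Rightarrow> bool" where
  "pos_def_kernel K \<longleftrightarrow>
     (\<forall>(n::nat) (xs::nat \<Rightarrow> real) (\<alpha>::nat \<Rightarrow> real).
        0 \<le> (\<Sum>i<n. \<Sum>j<n. \<alpha> i * \<alpha> j * K (xs i) (xs j)))"

definition measure_support :: "'a::topological_space measure \<Rightarrow> 'a set" where
  "measure_support \<rho> = {z. \<forall>U. open U \<and> z \<in> U \<longrightarrow> emeasure \<rho> U > 0}"

definition square_integrable :: "'a measure \<Rightarrow> ('a \<Rightarrow> real) \<Rightarrow> bool" where
  "square_integrable \<rho> c \<longleftrightarrow>
     c \<in> borel_measurable \<rho> \<and> integrable \<rho> (\<lambda>z. (c z)\<^sup>2)"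

definition f_c ::
  "((real^'n) \<times> real \<times> real) measure \<Rightarrow> (real \<Rightarrow> real \<Rightarrow> real)
    \<Rightarrow> ((real^'n) \<times> real \<times> real \<Rightarrow> real) \<Rightarrow> (real^'n) \<Rightarrow> real" where
  "f_c \<rho> K c x =
     (\<integral>z\<in>measure_support \<rho>. c z * K (fst z \<bullet> x + fst (snd z)) (snd (snd z)) \<partial>\<rho>)"

end

theory Submission
  imports Defs
begin

lemma bc_integrable:
  fixes M :: "'a::topological_space measure" and g :: "'a \<Rightarrow> real"
  assumes "finite_measure M" "sets M = sets borel" "continuous_on UNIV g" "\<And>x. \<bar>g x\<bar> \<le> B"
  shows "integrable M g"
proof -
  interpret finite_measure M by fact
  have "g \<in> borel_measurable M"
    by (subst measurable_cong_sets[OF assms(2) refl]) (rule borel_measurable_continuous_onI[OF assms(3)])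
  then show ?thesis by (intro integrable_const_bound[where B=B]) (auto simp: assms(4))
qed

lemma L1_density:
  fixes M :: "'a::euclidean_space measure" and f :: "'a \<Rightarrow> real"
  assumes fm: "finite_measure M" and sb: "sets M = sets borel" and f: "integrable M f"
  shows "\<forall>\<delta>>0. \<exists>g. continuous_on UNIV g \<and> (\<exists>B. \<forall>x. \<bar>g x\<bar> \<le> B) \<and>
            integral\<^sup>L M (\<lambda>x. \<bar>f x - g x\<bar>) < \<delta>"
  using f
proof induct
  case (base A c)
  interpret finite_measure M by fact
  have sp: "space M = UNIV" by (metis sb sets_eq_imp_space_eq space_borel)
  have Ab: "A \<in> sets borel" using base sb by simp
  show ?case
  proof (intro allI impI)
    fix \<delta> :: real assume \<delta>: "\<delta> > 0"
    define \<eta> where "\<eta> = \<delta> / (2*(\<bar>c\<bar>+1))"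
    have \<eta>: "\<eta> > 0" using \<delta> by (simp add: \<eta>_def)
    have inner: "emeasure M A = (SUP K \<in> {K. K \<subseteq> A \<and> compact K}. emeasure M K)"
      by (rule inner_regular[OF sb _ Ab]) simp
    have outer: "emeasure M A = (INF U \<in> {U. A \<subseteq> U \<and> open U}. emeasure M U)"
      by (rule outer_regular[OF sb _ Ab]) simp
    obtain K where K: "K \<subseteq> A" "compact K" "measure M A < measure M K + \<eta>"
    proof (cases "measure M A - \<eta> < 0")
      case True
      then show ?thesis using that[of "{}"] by simp
    next
      case False
      have "ennreal (measure M A - \<eta>) < ennreal (measure M A)"
        using False \<eta> by (intro ennreal_lessI) auto
      also have "\<dots> = (SUP K \<in> {K. K \<subseteq> A \<and> compact K}. emeasure M K)"
        using inner by (simp add: emeasure_eq_measure)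
      finally obtain K where "K \<subseteq> A" "compact K" "ennreal (measure M A - \<eta>) < emeasure M K"
        by (auto simp: less_SUP_iff)
      then show ?thesis using that[of K] False
        by (auto simp: emeasure_eq_measure ennreal_less_iff)
    qed
    obtain U where U: "A \<subseteq> U" "open U" "measure M U < measure M A + \<eta>"
    proof -
      have "emeasure M A < ennreal (measure M A + \<eta>)"
        using \<eta> by (simp add: emeasure_eq_measure ennreal_lessI)
      then have "(INF U \<in> {U. A \<subseteq> U \<and> open U}. emeasure M U) < ennreal (measure M A + \<eta>)"
        by (simp only: outer)
      then obtain U where "A \<subseteq> U" "open U" "emeasure M U < ennreal (measure M A + \<eta>)"
        by (auto simp: INF_less_iff)
      then show ?thesis using that[of U]
        by (auto simp: emeasure_eq_measure ennreal_less_iff)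
    qed
    have Ks: "K \<in> sets M" "U \<in> sets M" using K U sb by (auto intro: borel_compact)
    have mUK: "measure M (U - K) < 2 * \<eta>"
      using finite_measure_Diff[OF Ks(2) Ks(1)] K U by auto
    obtain f0 :: "'a \<Rightarrow> real" where f0: "continuous_on UNIV f0" "\<And>x. f0 x \<in> closed_segment 1 0"
      "\<And>x. x \<in> K \<Longrightarrow> f0 x = 1" "\<And>x. x \<in> -U \<Longrightarrow> f0 x = 0"
      using Urysohn[of K "-U" 1 0] K U compact_imp_closed by blast
    have f01: "0 \<le> f0 x \<and> f0 x \<le> 1" for x using f0(2)[of x] by (simp add: closed_segment_eq_real_ivl)
    define g where "g x = c * f0 x" for x
    have gc: "continuous_on UNIV g" unfolding g_def by (intro continuous_intros f0(1))
    have gb: "\<bar>g x\<bar> \<le> \<bar>c\<bar>" for x using f01[of x] by (simp add: g_def abs_mult mult_left_le)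
    have gi: "integrable M g" by (rule bc_integrable[OF fm sb gc gb])
    have pt: "\<bar>indicator A x *\<^sub>R c - g x\<bar> \<le> \<bar>c\<bar> * indicator (U - K) x" for x
    proof -
      consider "x \<in> K" | "x \<notin> U" | "x \<in> U - K" by blast
      then show ?thesis
      proof cases
        case 1 then show ?thesis using K f0(3)[of x] by (auto simp: g_def indicator_def)
      next
        case 2 then show ?thesis using U f0(4)[of x] by (auto simp: g_def indicator_def)
      next
        case 3
        have "\<bar>indicator A x - f0 x\<bar> \<le> 1" using f01[of x] by (auto simp: indicator_def)
        then have "\<bar>c\<bar> * \<bar>indicator A x - f0 x\<bar> \<le> \<bar>c\<bar>" by (simp add: mult_left_le)
        moreover have "indicator A x *\<^sub>R c - g x = c * (indicator A x - f0 x)"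
          by (simp add: g_def algebra_simps)
        moreover have "indicator (U - K) x = (1::real)" using 3 by simp
        ultimately show ?thesis by (simp only: abs_mult mult_1_right)
      qed
    qed
    have i1: "integrable M (\<lambda>x. \<bar>indicator A x *\<^sub>R c - g x\<bar>)"
      using base gi by (intro integrable_abs integrable_diff integrable_mult_left integrable_real_indicator) auto
    have i2: "integrable M (\<lambda>x. \<bar>c\<bar> * indicator (U - K) x)"
      using Ks by (intro integrable_mult_right integrable_real_indicator) (auto simp: top.not_eq_extremum[symmetric])
    have "integral\<^sup>L M (\<lambda>x. \<bar>indicator A x *\<^sub>R c - g x\<bar>) \<le> integral\<^sup>L M (\<lambda>x. \<bar>c\<bar> * indicator (U - K) x)"
      by (rule integral_mono[OF i1 i2 pt])
    also have "\<dots> = \<bar>c\<bar> * measure M (U - K)" using Ks by simp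
    also have "\<dots> \<le> \<bar>c\<bar> * (2 * \<eta>)" using mUK by (intro mult_left_mono) auto
    also have "\<dots> < \<delta>" using \<delta> by (simp add: \<eta>_def field_simps)
    finally show "\<exists>g. continuous_on UNIV g \<and> (\<exists>B. \<forall>x. \<bar>g x\<bar> \<le> B) \<and>
            integral\<^sup>L M (\<lambda>x. \<bar>indicator A x *\<^sub>R c - g x\<bar>) < \<delta>"
      using gc gb by blast
  qed
next
  case (add f g)
  show ?case
  proof (intro allI impI)
    fix \<delta> :: real assume \<delta>: "\<delta> > 0"
    obtain g1 B1 where g1: "continuous_on UNIV g1" "\<And>x. \<bar>g1 x\<bar> \<le> B1"
       "integral\<^sup>L M (\<lambda>x. \<bar>f x - g1 x\<bar>) < \<delta>/2"
      using add(2) \<delta> by (meson half_gt_zero)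
    obtain g2 B2 where g2: "continuous_on UNIV g2" "\<And>x. \<bar>g2 x\<bar> \<le> B2"
       "integral\<^sup>L M (\<lambda>x. \<bar>g x - g2 x\<bar>) < \<delta>/2"
      using add(4) \<delta> by (meson half_gt_zero)
    have i1: "integrable M (\<lambda>x. \<bar>f x - g1 x\<bar>)"
      using add(1) bc_integrable[OF fm sb g1(1,2)] by auto
    have i2: "integrable M (\<lambda>x. \<bar>g x - g2 x\<bar>)"
      using add(3) bc_integrable[OF fm sb g2(1,2)] by auto
    have i3: "integrable M (\<lambda>x. \<bar>f x + g x - (g1 x + g2 x)\<bar>)"
      using add(1,3) bc_integrable[OF fm sb g1(1,2)] bc_integrable[OF fm sb g2(1,2)] by auto
    have "integral\<^sup>L M (\<lambda>x. \<bar>f x + g x - (g1 x + g2 x)\<bar>) \<le>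
          integral\<^sup>L M (\<lambda>x. \<bar>f x - g1 x\<bar> + \<bar>g x - g2 x\<bar>)"
      using i1 i2 i3 by (intro integral_mono) auto
    also have "\<dots> = integral\<^sup>L M (\<lambda>x. \<bar>f x - g1 x\<bar>) + integral\<^sup>L M (\<lambda>x. \<bar>g x - g2 x\<bar>)"
      using i1 i2 by simp
    also have "\<dots> < \<delta>" using g1 g2 by simp
    finally show "\<exists>h. continuous_on UNIV h \<and> (\<exists>B. \<forall>x. \<bar>h x\<bar> \<le> B) \<and>
            integral\<^sup>L M (\<lambda>x. \<bar>f x + g x - h x\<bar>) < \<delta>"
      using g1 g2 by (intro exI[of _ "\<lambda>x. g1 x + g2 x"] conjI continuous_intros
          exI[of _ "B1 + B2"] allI) (auto intro: abs_triangle_ineq[THEN order_trans] add_mono)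
  qed
next
  case (lim f s)
  show ?case
  proof (intro allI impI)
    fix \<delta> :: real assume \<delta>: "\<delta> > 0"
    have sp: "space M = UNIV" by (metis sb sets_eq_imp_space_eq space_borel)
    have "(\<lambda>i. integral\<^sup>L M (\<lambda>x. \<bar>s i x - f x\<bar>)) \<longlonglongrightarrow> integral\<^sup>L M (\<lambda>x. 0::real)"
    proof (rule integral_dominated_convergence[where w="\<lambda>x. 3 * \<bar>f x\<bar>"])
      show "(\<lambda>x. 0::real) \<in> borel_measurable M" by simp
      show "(\<lambda>x. \<bar>s i x - f x\<bar>) \<in> borel_measurable M" for i
        using lim(1)[of i] lim(5) by (auto intro!: borel_measurable_integrable)
      show "integrable M (\<lambda>x. 3 * \<bar>f x\<bar>)" using lim(5) by auto
      show "AE x in M. (\<lambda>i. \<bar>s i x - f x\<bar>) \<longlonglongrightarrow> 0"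
      proof (rule AE_I2)
        fix x assume "x \<in> space M"
        then have "(\<lambda>i. s i x - f x) \<longlonglongrightarrow> 0" using lim(3) by (simp add: LIM_zero)
        then show "(\<lambda>i. \<bar>s i x - f x\<bar>) \<longlonglongrightarrow> 0" by (simp add: tendsto_rabs_zero)
      qed
      show "AE x in M. norm \<bar>s i x - f x\<bar> \<le> 3 * \<bar>f x\<bar>" for i
      proof (rule AE_I2)
        fix x assume "x \<in> space M"
        then have "\<bar>s i x\<bar> \<le> 2 * \<bar>f x\<bar>" using lim(4) by auto
        then show "norm \<bar>s i x - f x\<bar> \<le> 3 * \<bar>f x\<bar>" by auto
      qed
    qed
    then have "(\<lambda>i. integral\<^sup>L M (\<lambda>x. \<bar>s i x - f x\<bar>)) \<longlonglongrightarrow> 0" by simp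
    then obtain i where i: "integral\<^sup>L M (\<lambda>x. \<bar>s i x - f x\<bar>) < \<delta>/2"
      using \<delta> by (metis (no_types, lifting) eventually_at_top_linorder half_gt_zero
          order.refl order_tendstoD(2))
    obtain g B where g: "continuous_on UNIV g" "\<And>x. \<bar>g x\<bar> \<le> B"
       "integral\<^sup>L M (\<lambda>x. \<bar>s i x - g x\<bar>) < \<delta>/2"
      using lim(2)[of i] \<delta> by (meson half_gt_zero)
    have gi: "integrable M g" by (rule bc_integrable[OF fm sb g(1,2)])
    have i1: "integrable M (\<lambda>x. \<bar>s i x - f x\<bar>)" using lim(1)[of i] lim(5) by auto
    have i2: "integrable M (\<lambda>x. \<bar>s i x - g x\<bar>)" using lim(1)[of i] gi by auto
    have i3: "integrable M (\<lambda>x. \<bar>f x - g x\<bar>)" using lim(5) gi by auto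
    have "integral\<^sup>L M (\<lambda>x. \<bar>f x - g x\<bar>) \<le>
          integral\<^sup>L M (\<lambda>x. \<bar>s i x - f x\<bar> + \<bar>s i x - g x\<bar>)"
      using i1 i2 i3 by (intro integral_mono) auto
    also have "\<dots> = integral\<^sup>L M (\<lambda>x. \<bar>s i x - f x\<bar>) + integral\<^sup>L M (\<lambda>x. \<bar>s i x - g x\<bar>)"
      using i1 i2 by simp
    also have "\<dots> < \<delta>" using i g by simp
    finally show "\<exists>g. continuous_on UNIV g \<and> (\<exists>B. \<forall>x. \<bar>g x\<bar> \<le> B) \<and>
            integral\<^sup>L M (\<lambda>x. \<bar>f x - g x\<bar>) < \<delta>"
      using g by blast
  qed
qed


lemma K_bound:
  fixes M :: "'w measure" and k :: "'w \<Rightarrow> real \<Rightarrow> real \<Rightarrow> real"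
  assumes "prob_space M" "\<And>s t. AE \<omega> in M. \<bar>k \<omega> s t\<bar> \<le> 1"
    "\<And>s t. K s t = (\<integral>\<omega>. k \<omega> s t \<partial>M)"
  shows "\<bar>K s t\<bar> \<le> 1"
proof -
  interpret prob_space M by fact
  have "\<bar>K s t\<bar> \<le> (\<integral>\<omega>. \<bar>k \<omega> s t\<bar> \<partial>M)"
    using integral_norm_bound[of M "\<lambda>\<omega>. k \<omega> s t"] assms(3) by simp
  also have "\<dots> \<le> 1"
  proof (cases "integrable M (\<lambda>\<omega>. \<bar>k \<omega> s t\<bar>)")
    case True
    have "(\<integral>\<omega>. \<bar>k \<omega> s t\<bar> \<partial>M) \<le> (\<integral>\<omega>. 1 \<partial>M)"
      using True assms(2)[of s t] by (intro integral_mono_AE) auto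
    then show ?thesis by (simp add: prob_space)
  next
    case False
    then show ?thesis by (simp add: not_integrable_integral_eq)
  qed
  finally show ?thesis .
qed

theorem lemma10:
  fixes M :: "'w measure"
    and k :: "'w \<Rightarrow> real \<Rightarrow> real \<Rightarrow> real"
    and K :: "real \<Rightarrow> real \<Rightarrow> real"
    and \<rho> :: "((real^'n) \<times> real \<times> real) measure"
  assumes "prob_space M"
    and "(\<lambda>(\<omega>, s, t). k \<omega> s t) \<in> borel_measurable (M \<Otimes>\<^sub>M (borel \<Otimes>\<^sub>M borel))"
    and "\<And>s t. AE \<omega> in M. \<bar>k \<omega> s t\<bar> \<le> 1"
    and "\<And>s t. K s t = (\<integral>\<omega>. k \<omega> s t \<partial>M)"
    and "continuous_on UNIV (\<lambda>(s, t). K s t)"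
    and "pos_def_kernel K"
    and "prob_space \<rho>"
    and "sets \<rho> = sets borel"
    and "compact (measure_support \<rho>)"
    and "square_integrable \<rho> c"
    and "compact X"
    and "\<epsilon> > 0"
  shows "\<exists>c'. continuous_on (measure_support \<rho>) c' \<and>
           (\<forall>x\<in>X. \<bar>f_c \<rho> K c x - f_c \<rho> K c' x\<bar> < \<epsilon>)"
proof -
  interpret prob_space \<rho> by fact
  define S where "S = measure_support \<rho>"
  have sb: "sets \<rho> = sets borel" by fact
  have Kb: "\<bar>K s t\<bar> \<le> 1" for s t by (rule K_bound[OF assms(1,3,4)])
  have Ssets: "S \<in> sets \<rho>" using assms(9) sb by (simp add: S_def compact_imp_closed)
  have cm: "c \<in> borel_measurable \<rho>" using assms(10) by (simp add: square_integrable_def)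
  have ci: "integrable \<rho> c"
  proof (rule Bochner_Integration.integrable_bound[where f="\<lambda>z. 1 + (c z)\<^sup>2"])
    show "integrable \<rho> (\<lambda>z. 1 + (c z)\<^sup>2)"
      using assms(10) by (simp add: square_integrable_def)
    show "c \<in> borel_measurable \<rho>" by (rule cm)
    show "AE z in \<rho>. norm (c z) \<le> norm (1 + (c z)\<^sup>2)"
    proof (rule AE_I2)
      fix z
      have h: "(\<bar>c z\<bar> - 1)\<^sup>2 = (c z)\<^sup>2 - 2 * \<bar>c z\<bar> + 1"
        by (simp add: power2_eq_square algebra_simps)
      have "0 \<le> (\<bar>c z\<bar> - 1)\<^sup>2" "0 \<le> (c z)\<^sup>2" by simp_all
      then have "\<bar>c z\<bar> \<le> 1 + (c z)\<^sup>2" using h by linarith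
      then show "norm (c z) \<le> norm (1 + (c z)\<^sup>2)" by simp
    qed
  qed
  obtain g B where g: "continuous_on UNIV g" "\<And>z. \<bar>g z\<bar> \<le> B"
    "integral\<^sup>L \<rho> (\<lambda>z. \<bar>c z - g z\<bar>) < \<epsilon>"
    using L1_density[OF finite_measure_axioms sb ci] assms(12) by blast
  have gi: "integrable \<rho> g" by (rule bc_integrable[OF finite_measure_axioms sb g(1,2)])
  have "\<bar>f_c \<rho> K c x - f_c \<rho> K g x\<bar> < \<epsilon>" if "x \<in> X" for x
  proof -
    define \<phi> where "\<phi> z = (\<lambda>(s, t). K s t) (fst z \<bullet> x + fst (snd z), snd (snd z))"
      for z :: "(real^'n) \<times> real \<times> real"
    have \<phi>c: "continuous_on UNIV \<phi>"
      unfolding \<phi>_def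
      by (rule continuous_on_compose2[OF assms(5)]) (auto intro!: continuous_intros)
    have \<phi>b: "\<bar>\<phi> z\<bar> \<le> 1" for z by (simp add: \<phi>_def Kb)
    have \<phi>m: "\<phi> \<in> borel_measurable \<rho>"
      by (subst measurable_cong_sets[OF sb refl]) (rule borel_measurable_continuous_onI[OF \<phi>c])
    have gm: "g \<in> borel_measurable \<rho>" using gi by auto
    have eq: "K (fst z \<bullet> x + fst (snd z)) (snd (snd z)) = \<phi> z" for z
      by (simp add: \<phi>_def)
    have i1: "integrable \<rho> (\<lambda>z. indicator S z *\<^sub>R (c z * \<phi> z))"
    proof (intro integrable_mult_indicator[OF Ssets] Bochner_Integration.integrable_bound[OF integrable_abs[OF ci]])
      show "(\<lambda>z. c z * \<phi> z) \<in> borel_measurable \<rho>" using cm \<phi>m by measurable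
      show "AE z in \<rho>. norm (c z * \<phi> z) \<le> norm \<bar>c z\<bar>"
      proof (rule AE_I2)
        fix z show "norm (c z * \<phi> z) \<le> norm \<bar>c z\<bar>"
          using \<phi>b[of z] by (simp add: abs_mult mult_left_le)
      qed
    qed
    have i2: "integrable \<rho> (\<lambda>z. indicator S z *\<^sub>R (g z * \<phi> z))"
    proof (intro integrable_mult_indicator[OF Ssets] Bochner_Integration.integrable_bound[OF integrable_abs[OF gi]])
      show "(\<lambda>z. g z * \<phi> z) \<in> borel_measurable \<rho>" using gm \<phi>m by measurable
      show "AE z in \<rho>. norm (g z * \<phi> z) \<le> norm \<bar>g z\<bar>"
      proof (rule AE_I2)
        fix z show "norm (g z * \<phi> z) \<le> norm \<bar>g z\<bar>"
          using \<phi>b[of z] by (simp add: abs_mult mult_left_le)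
      qed
    qed
    have i3: "integrable \<rho> (\<lambda>z. \<bar>c z - g z\<bar>)" using ci gi by auto
    have "f_c \<rho> K c x - f_c \<rho> K g x =
        (\<integral>z. indicator S z *\<^sub>R (c z * \<phi> z) - indicator S z *\<^sub>R (g z * \<phi> z) \<partial>\<rho>)"
      unfolding f_c_def set_lebesgue_integral_def eq S_def[symmetric]
      using i1 i2 by simp
    also have "\<bar>\<dots>\<bar> \<le> integral\<^sup>L \<rho> (\<lambda>z. \<bar>c z - g z\<bar>)"
    proof (rule integral_abs_bound_integral)
      show "integrable \<rho> (\<lambda>z. indicator S z *\<^sub>R (c z * \<phi> z) - indicator S z *\<^sub>R (g z * \<phi> z))"
        using i1 i2 by simp
      show "integrable \<rho> (\<lambda>z. \<bar>c z - g z\<bar>)" by (rule i3)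
      fix z
      have "\<bar>indicator S z *\<^sub>R (c z * \<phi> z) - indicator S z *\<^sub>R (g z * \<phi> z)\<bar>
           = \<bar>indicator S z * \<phi> z\<bar> * \<bar>c z - g z\<bar>"
        by (simp add: algebra_simps abs_mult[symmetric])
      also have "\<dots> \<le> 1 * \<bar>c z - g z\<bar>"
        using \<phi>b[of z] by (intro mult_right_mono) (auto simp: indicator_def abs_mult)
      finally show "\<bar>indicator S z *\<^sub>R (c z * \<phi> z) - indicator S z *\<^sub>R (g z * \<phi> z)\<bar> \<le> \<bar>c z - g z\<bar>"
        by simp
    qed
    finally show ?thesis using g(3) by linarith
  qed
  moreover have "continuous_on (measure_support \<rho>) g" using g(1) continuous_on_subset by blast
  ultimately show ?thesis by blast
qed

end
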